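(* Let $A\in\mathbb{R}^{n\times d}$ have i.i.d. rows with mean zero and covariance $\Sigma$, let $b\in\mathbb{R}^n$, and let $A$ be split row-wise into $m$ blocks $A^{(1)},\dots,A^{(m)}\in\mathbb{R}^{(n/m)\times d}$. Let $f(x)=\frac1{2n}\|Ax-b\|_2^2+\frac\lambda2\|x\|_2^2$ ($\lambda>0$), $g(x)=\nabla f(x)$, $H=\frac1nA^TA+\lambda I$, $d_\lambda=\mathrm{tr}(\Sigma(\Sigma+\lambda I)^{-1})$ with $md_\lambda<n$, and \[\tilde H=\left(\frac1m\sum_{i=1}^m\left(\frac{1}{1-\frac{md_\lambda}{n}}\frac mn A^{(i)T}A^{(i)}+\lambda I\right)^{-1}\right)^{-1}.\] Let $\omega^\star=\arg\min f$, $\omega_{t+1}=\omega_t-\tilde H^{-1}g(\omega_t)$ and $\Delta_t=\omega_t-\omega^\star$. Then $\|\Delta_{t+1}\|\le\beta\|\Delta_t\|$, where \[\beta=\frac{\sqrt2\alpha}{\sqrt{1-\alpha^2}}\sqrt{\frac{\sigma_{\max}+\lambda+\alpha_0}{\sigma_{\min}+\lambda-\alpha_0}},\] $\alpha_0=\|\Sigma-\frac1nA^TA\|$, $\alpha_1=\|\tilde H^{-1}-\mathbb{E}[\tilde H^{-1}]\|$, $\Omega_0=\mathbb{E}[\tilde H^{-1}]-(\Sigma+\lambda I)^{-1}$, $\alpha=(\sigma_{\max}+\lambda+\alpha_0)\left(\frac1{\lambda^2}\alpha_0+\alpha_1+\|\Omega_0\|\right)$, and $\sigma_{\min},\sigma_{\max}$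 are the smallest and largest eigenvalues of $\Sigma$.
   Context: $\|\cdot\|$ denotes the Euclidean norm on vectors and the spectral norm on matrices. $n/m$ is assumed to be an integer. *)

theory Defs
  imports "HOL-Analysis.Analysis" "HOL-Probability.Probability"
begin

definition spec_norm :: "real^'d^'d \<Rightarrow> real" where
  "spec_norm S = onorm (\<lambda>x. S *v x)"

definition outer :: "real^'d \<Rightarrow> real^'d \<Rightarrow> real^'d^'d" where
  "outer u v = (\<chi> i j. u $ i * v $ j)"

text \<open>Gram matrix of the rows A j, j in J, i.e. A_J^T A_J for the row submatrix A_J.\<close>
definition gram :: "(nat \<Rightarrow> real^'d) \<Rightarrow> nat set \<Rightarrow> real^'d^'d" where
  "gram A J = (\<Sum>j\<in>J. outer (A j) (A j))"

text \<open>Row indices (0-based) of the i-th block (0 <= i < m) when n rows are split into m blocks.\<close>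
definition block :: "nat \<Rightarrow> nat \<Rightarrow> nat \<Rightarrow> nat set" where
  "block n m i = {i * (n div m) ..< (Suc i) * (n div m)}"

definition eigenvalues :: "real^'d^'d \<Rightarrow> real set" where
  "eigenvalues S = {\<mu>. \<exists>v. v \<noteq> 0 \<and> S *v v = \<mu> *s v}"

definition eff_dim :: "real^'d^'d \<Rightarrow> real \<Rightarrow> real" where
  "eff_dim Sig lam = trace (Sig ** matrix_inv (Sig + lam *\<^sub>R mat 1))"

definition Htilde :: "nat \<Rightarrow> nat \<Rightarrow> real \<Rightarrow> real \<Rightarrow> (nat \<Rightarrow> real^'d) \<Rightarrow> real^'d^'d" where
  "Htilde n m lam dl A = matrix_inv ((1 / real m) *\<^sub>R
     (\<Sum>i<m. matrix_inv (((1 / (1 - real m * dl / real n)) * (real m / real n)) *\<^sub>R gram A (block n m i)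
                          + lam *\<^sub>R mat 1)))"

end

theory Submission
  imports Defs
begin



lemma spec_norm_bound: "norm (M *v x) \<le> spec_norm M * norm x"
  unfolding spec_norm_def by (rule onorm[OF matrix_vector_mul_bounded_linear])

lemma spec_norm_nonneg: "0 \<le> spec_norm M"
  unfolding spec_norm_def by (rule onorm_pos_le[OF matrix_vector_mul_bounded_linear])

lemma matrix_inv_props:
  fixes A :: "real^'n^'n"
  assumes "invertible A"
  shows "A ** matrix_inv A = mat 1 \<and> matrix_inv A ** A = mat 1"
  using assms unfolding invertible_def matrix_inv_def by (rule someI_ex)

lemma lower_bound_invertible:
  fixes A :: "real^'n^'n"
  assumes c: "c > 0" and lb: "\<And>x. c * norm x \<le> norm (A *v x)"
  shows "invertible A"
proof -
  have "inj ((*v) A)"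
  proof (rule injI)
    fix x y assume "A *v x = A *v y"
    hence "A *v (x - y) = 0" by (simp add: matrix_vector_mult_diff_distrib)
    hence "c * norm (x - y) \<le> 0" using lb[of "x - y"] by simp
    hence "norm (x - y) = 0" using c by (smt (verit) mult_pos_pos norm_ge_zero)
    thus "x = y" by simp
  qed
  thus ?thesis using matrix_left_invertible_injective invertible_left_inverse by blast
qed

lemma gram_mult: "gram A J *v x = (\<Sum>j\<in>J. (A j \<bullet> x) *\<^sub>R A j)"
  unfolding gram_def outer_def
  by (simp add: vec_eq_iff matrix_vector_mult_def sum_component inner_vec_def sum_distrib_left sum_distrib_right
      mult_ac sum.swap[of _ J])

lemma gram_quad: "x \<bullet> (gram A J *v x) = (\<Sum>j\<in>J. (A j \<bullet> x)\<^sup>2)"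
  unfolding gram_mult by (simp add: inner_sum_right power2_eq_square inner_commute)

lemma sym_form:
  fixes S :: "real^'d^'d"
  assumes "\<forall>i k. S$i$k = S$k$i"
  shows "x \<bullet> (S *v y) = y \<bullet> (S *v x)"
proof -
  have "x \<bullet> (S *v y) = (\<Sum>i\<in>UNIV. \<Sum>k\<in>UNIV. x$i * S$i$k * y$k)"
    by (simp add: inner_vec_def matrix_vector_mult_def sum_distrib_left mult_ac)
  also have "\<dots> = (\<Sum>k\<in>UNIV. \<Sum>i\<in>UNIV. x$i * S$i$k * y$k)" by (rule sum.swap)
  also have "\<dots> = y \<bullet> (S *v x)"
    using assms by (simp add: inner_vec_def matrix_vector_mult_def sum_distrib_left mult_ac)
  finally show ?thesis .
qed

lemma quad_disc:
  fixes a b c :: real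
  assumes c: "c \<ge> 0" and h: "\<And>t. 0 \<le> a + 2*b*t + c*t^2"
  shows "b^2 \<le> a*c"
proof (cases "c = 0")
  case True
  have "b = 0"
  proof (rule ccontr)
    assume b: "b \<noteq> 0"
    have "0 \<le> a + 2*b*(-(\<bar>a\<bar>+1)/(2*b)) + c*(-(\<bar>a\<bar>+1)/(2*b))^2" by (rule h)
    also have "\<dots> = a - (\<bar>a\<bar>+1)" using b True by (simp add: field_simps)
    finally show False by linarith
  qed
  thus ?thesis using True by simp
next
  case False
  hence cp: "c > 0" using c by simp
  have "0 \<le> a + 2*b*(-b/c) + c*(-b/c)^2" by (rule h)
  also have "\<dots> = a - b^2/c" using cp by (simp add: field_simps power2_eq_square)
  finally have "b^2/c \<le> a" by simp
  thus ?thesis using cp by (simp add: field_simps mult.commute)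
qed

lemma psd_cs:
  fixes S :: "real^'d^'d"
  assumes sym: "\<forall>i k. S$i$k = S$k$i" and psd: "\<And>z. 0 \<le> z \<bullet> (S *v z)"
  shows "(x \<bullet> (S *v y))^2 \<le> (x \<bullet> (S *v x)) * (y \<bullet> (S *v y))"
proof (rule quad_disc)
  show "0 \<le> y \<bullet> (S *v y)" by (rule psd)
  fix t :: real
  have "(x + t *\<^sub>R y) \<bullet> (S *v (x + t *\<^sub>R y)) =
        x \<bullet> (S *v x) + 2 * (x \<bullet> (S *v y)) * t + (y \<bullet> (S *v y)) * t^2"
    using sym_form[OF sym, of y x]
    by (simp add: matrix_vector_right_distrib matrix_scaleR_vector_ac[symmetric] inner_add_left inner_add_right
        algebra_simps power2_eq_square)
  thus "0 \<le> x \<bullet> (S *v x) + 2 * (x \<bullet> (S *v y)) * t + (y \<bullet> (S *v y)) * t^2"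
    using psd[of "x + t *\<^sub>R y"] by simp
qed

lemma psd_kernel:
  fixes S :: "real^'d^'d"
  assumes sym: "\<forall>i k. S$i$k = S$k$i" and psd: "\<And>z. 0 \<le> z \<bullet> (S *v z)"
    and v: "v \<bullet> (S *v v) = 0"
  shows "S *v v = 0"
proof -
  have "((S *v v) \<bullet> (S *v v))^2 \<le> ((S *v v) \<bullet> (S *v (S *v v))) * (v \<bullet> (S *v v))"
    by (rule psd_cs[OF sym psd])
  hence "((S *v v) \<bullet> (S *v v))^2 \<le> 0" using v by simp
  hence "(S *v v) \<bullet> (S *v v) = 0"
    using sum_power2_eq_zero_iff[of "(S *v v) \<bullet> (S *v v)" 0] zero_le_power2[of "(S *v v) \<bullet> (S *v v)"] by simp
  thus ?thesis by simp
qed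

lemma eig_max:
  fixes S :: "real^'d^'d"
  assumes sym: "\<forall>i k. S$i$k = S$k$i" and psd: "\<And>z. 0 \<le> z \<bullet> (S *v z)"
  shows "\<exists>\<mu>\<in>eigenvalues S. \<mu> \<ge> 0 \<and> (\<forall>x. norm (S *v x) \<le> \<mu> * norm x)"
proof -
  let ?q = "\<lambda>x. x \<bullet> (S *v x)"
  have cont: "continuous_on (sphere (0::real^'d) 1) ?q"
    by (intro continuous_intros continuous_on_compose2[OF linear_continuous_on[OF matrix_vector_mul_bounded_linear]]) auto
  have ne: "sphere (0::real^'d) 1 \<noteq> {}" by simp
  obtain v where v: "v \<in> sphere 0 1" and vmax: "\<forall>y\<in>sphere 0 1. ?q y \<le> ?q v"
    using continuous_attains_sup[OF compact_sphere ne cont] by blast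
  define \<mu> where "\<mu> = ?q v"
  have nv: "norm v = 1" using v by simp
  have qle: "?q x \<le> \<mu> * (norm x)^2" for x
  proof (cases "x = 0")
    case True thus ?thesis by simp
  next
    case False
    hence np: "norm x > 0" by simp
    have "(x /\<^sub>R norm x) \<in> sphere 0 1" using np by simp
    hence "?q (x /\<^sub>R norm x) \<le> \<mu>" using vmax \<mu>_def by blast
    moreover have "?q (x /\<^sub>R norm x) = ?q x / (norm x)^2"
      by (simp add: matrix_vector_mult_scaleR power2_eq_square divide_inverse mult_ac)
    ultimately show ?thesis using np by (simp add: field_simps)
  qed
  define T where "T = \<mu> *\<^sub>R mat 1 - S"
  have Tx: "T *v x = \<mu> *\<^sub>R x - S *v x" for x
    by (simp add: T_def matrix_vector_mult_diff_rdistrib scaleR_matrix_vector_assoc[symmetric])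
  have symT: "\<forall>i k. T$i$k = T$k$i" using sym by (simp add: T_def mat_def)
  have psdT: "0 \<le> z \<bullet> (T *v z)" for z
    using qle[of z] by (simp add: Tx inner_diff_right dot_square_norm)
  have "v \<bullet> (T *v v) = 0" using nv by (simp add: Tx inner_diff_right dot_square_norm \<mu>_def)
  hence "T *v v = 0" by (rule psd_kernel[OF symT psdT])
  hence Sv: "S *v v = \<mu> *s v" by (simp add: Tx scalar_mult_eq_scaleR)
  have "v \<noteq> 0" using nv by auto
  hence mem: "\<mu> \<in> eigenvalues S" using Sv unfolding eigenvalues_def by blast
  have mu0: "\<mu> \<ge> 0" unfolding \<mu>_def by (rule psd)
  have bnd: "norm (S *v x) \<le> \<mu> * norm x" for x
  proof -
    let ?y = "S *v x"
    have "(?y \<bullet> (S *v x))^2 \<le> (?y \<bullet> (S *v ?y)) * (x \<bullet> (S *v x))"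
      by (rule psd_cs[OF sym psd])
    also have "\<dots> \<le> (\<mu> * (norm ?y)^2) * (\<mu> * (norm x)^2)"
      by (intro mult_mono qle psd) (use mu0 in auto)
    finally have "((norm ?y)^2)^2 \<le> (\<mu> * norm x)^2 * (norm ?y)^2"
      by (simp add: dot_square_norm power_mult_distrib mult_ac power2_eq_square)
    hence "(norm ?y)^2 \<le> (\<mu> * norm x)^2"
    proof (cases "norm ?y = 0")
      case False
      hence "(norm ?y)^2 > 0" by simp
      moreover have "(norm ?y)^2 * (norm ?y)^2 \<le> (\<mu> * norm x)^2 * (norm ?y)^2"
        using \<open>((norm ?y)^2)^2 \<le> (\<mu> * norm x)^2 * (norm ?y)^2\<close> by (simp only: power2_eq_square[of "(norm ?y)^2"])
      ultimately show ?thesis using mult_right_le_imp_le by blast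
    qed simp
    thus ?thesis using mu0 by (simp add: power2_le_iff_abs_le)
  qed
  show ?thesis using mem mu0 bnd by blast
qed

lemma eig_finite:
  fixes S :: "real^'d^'d"
  assumes sym: "\<forall>i k. S$i$k = S$k$i"
  shows "finite (eigenvalues S)"
proof -
  define E where "E = eigenvalues S"
  define e where "e = (\<lambda>\<mu>. SOME v. v \<noteq> 0 \<and> S *v v = \<mu> *s v)"
  have e: "e \<mu> \<noteq> 0 \<and> S *v e \<mu> = \<mu> *\<^sub>R e \<mu>" if "\<mu> \<in> E" for \<mu>
  proof -
    have "\<exists>v. v \<noteq> 0 \<and> S *v v = \<mu> *s v" using that unfolding E_def eigenvalues_def by blast
    hence "e \<mu> \<noteq> 0 \<and> S *v e \<mu> = \<mu> *s e \<mu>" unfolding e_def by (rule someI_ex)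
    thus ?thesis by (simp add: scalar_mult_eq_scaleR)
  qed
  have inj: "inj_on e E"
  proof (rule inj_onI)
    fix a b assume a: "a \<in> E" and b: "b \<in> E" and eq: "e a = e b"
    have "a *\<^sub>R e a = S *v e a" using e[OF a] by simp
    also have "\<dots> = S *v e b" using eq by simp
    also have "\<dots> = b *\<^sub>R e b" using e[OF b] by simp
    finally have "a *\<^sub>R e a = b *\<^sub>R e a" using eq by simp
    hence "(a - b) *\<^sub>R e a = 0" by (simp add: algebra_simps)
    thus "a = b" using e[OF a] by simp
  qed
  have orth: "pairwise orthogonal (e ` E)"
  proof (clarsimp simp: pairwise_def)
    fix a b assume a: "a \<in> E" and b: "b \<in> E" and ne: "e a \<noteq> e b"
    hence ab: "a \<noteq> b" by auto
    have "a * (e b \<bullet> e a) = e b \<bullet> (S *v e a)" using e[OF a] by (simp only: inner_scaleR_right)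
    also have "\<dots> = e a \<bullet> (S *v e b)" by (rule sym_form[OF sym])
    also have "\<dots> = b * (e a \<bullet> e b)" using e[OF b] by (simp only: inner_scaleR_right)
    also have "\<dots> = b * (e b \<bullet> e a)" by (simp only: inner_commute)
    finally have "(a - b) * (e b \<bullet> e a) = 0" by (simp add: algebra_simps)
    hence "e b \<bullet> e a = 0" using ab by simp
    thus "orthogonal (e a) (e b)" unfolding orthogonal_def by (simp only: inner_commute)
  qed
  have "0 \<notin> e ` E" using e by force
  hence "independent (e ` E)" using pairwise_orthogonal_independent orth by blast
  hence "finite (e ` E)" using independent_bound by blast
  thus ?thesis using finite_imageD inj E_def by blast
qed



lemma deriv_f:
  fixes A :: "nat \<Rightarrow> real^'d" and b :: "nat \<Rightarrow> real"
  shows "((\<lambda>x. (1 / (2 * real n)) * (\<Sum>j<n. (A j \<bullet> x - b j)\<^sup>2) + lam / 2 * (norm x)\<^sup>2) has_derivative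
     (\<lambda>h. ((1 / real n) *\<^sub>R (\<Sum>j<n. (A j \<bullet> x - b j) *\<^sub>R A j) + lam *\<^sub>R x) \<bullet> h)) (at x)"
proof -
  have e: "(\<lambda>x. (1 / (2 * real n)) * (\<Sum>j<n. (A j \<bullet> x - b j)\<^sup>2) + lam / 2 * (norm x)\<^sup>2)
     = (\<lambda>x. (1 / (2 * real n)) * (\<Sum>j<n. (A j \<bullet> x - b j) * (A j \<bullet> x - b j)) + lam / 2 * (x \<bullet> x))"
    by (simp add: power2_eq_square power2_norm_eq_inner[symmetric])
  show ?thesis unfolding e
    apply (rule derivative_eq_intros refl | simp)+
    apply (simp add: inner_add_left inner_sum_left algebra_simps sum_distrib_left)
    apply (rule ext)
    apply (simp add: inner_commute[of x] sum_divide_distrib sum_subtractf[symmetric] sum_distrib_left[symmetric] add_divide_distrib diff_divide_distrib)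
    done
qed

lemma cov_psd:
  fixes M :: "'s measure" and Y :: "'s \<Rightarrow> real^'d" and Sig :: "real^'d^'d"
  assumes cov: "\<forall>i k. integrable M (\<lambda>s. Y s $ i * Y s $ k) \<and> Sig $ i $ k = integral\<^sup>L M (\<lambda>s. Y s $ i * Y s $ k)"
  shows "0 \<le> z \<bullet> (Sig *v z)"
proof -
  have "z \<bullet> (Sig *v z) = (\<Sum>i\<in>UNIV. \<Sum>k\<in>UNIV. z$i * z$k * Sig$i$k)"
    by (simp add: inner_vec_def matrix_vector_mult_def sum_distrib_left mult_ac)
  also have "\<dots> = (\<Sum>i\<in>UNIV. \<Sum>k\<in>UNIV. integral\<^sup>L M (\<lambda>s. z$i * z$k * (Y s $ i * Y s $ k)))"
    using cov by simp
  also have "\<dots> = integral\<^sup>L M (\<lambda>s. \<Sum>i\<in>UNIV. \<Sum>k\<in>UNIV. z$i * z$k * (Y s $ i * Y s $ k))"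
    using cov by (simp add: integral_sum)
  also have "\<dots> = integral\<^sup>L M (\<lambda>s. (z \<bullet> Y s)^2)"
    by (simp add: inner_vec_def power2_eq_square sum_distrib_left sum_distrib_right mult_ac)
  also have "\<dots> \<ge> 0" by simp
  finally show ?thesis .
qed



lemma coercive_bound:
  fixes M :: "real^'d^'d"
  assumes c: "c > 0" and q: "\<And>x. c * (norm x)^2 \<le> x \<bullet> (M *v x)"
  shows "c * norm x \<le> norm (M *v x)"
proof (cases "x = 0")
  case True thus ?thesis by simp
next
  case False
  hence np: "norm x > 0" by simp
  have "c * norm x * norm x \<le> norm x * norm (M *v x)"
    using q[of x] norm_cauchy_schwarz[of x "M *v x"] by (simp add: power2_eq_square mult_ac)
  thus ?thesis using np by (simp add: mult.commute)
qed

lemma inv_bound: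
  fixes M :: "real^'d^'d"
  assumes c: "c > 0" and lb: "\<And>x. c * norm x \<le> norm (M *v x)"
  shows "M *v (matrix_inv M *v y) = y" "matrix_inv M *v (M *v y) = y"
    "norm (matrix_inv M *v y) \<le> norm y / c"
proof -
  have inv: "invertible M" by (rule lower_bound_invertible[OF c lb])
  have p: "M ** matrix_inv M = mat 1 \<and> matrix_inv M ** M = mat 1"
  proof -
    have "M ** matrix_inv M = mat 1 \<and> matrix_inv M ** M = mat 1"
      using inv unfolding invertible_def matrix_inv_def by (rule someI_ex)
    thus ?thesis .
  qed
  show 1: "M *v (matrix_inv M *v y) = y" using p by (simp add: matrix_vector_mul_assoc)
  show "matrix_inv M *v (M *v y) = y" using p by (simp add: matrix_vector_mul_assoc)
  have "c * norm (matrix_inv M *v y) \<le> norm y" using lb[of "matrix_inv M *v y"] 1 by simp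
  thus "norm (matrix_inv M *v y) \<le> norm y / c" using c by (simp add: field_simps)
qed

lemma beta_ge:
  fixes al dd c :: real
  assumes "0 \<le> al" "al < 1" "0 < dd" "dd \<le> c"
  shows "al \<le> sqrt 2 * al / sqrt (1 - al^2) * sqrt (c / dd)"
proof -
  have k: "1 \<le> sqrt (c / dd)" using assms by simp
  have a2: "al^2 < 1" using assms by (simp add: power_less_one_iff abs_square_less_1)
  have s0: "0 < sqrt (1 - al^2)" using a2 by simp
  have s1: "sqrt (1 - al^2) \<le> 1" using assms by simp
  have r2: "1 \<le> sqrt (2::real)" by simp
  have "al \<le> sqrt 2 * al" using r2 assms by (simp add: mult_le_cancel_right1)
  also have "\<dots> \<le> sqrt 2 * al / sqrt (1 - al^2)"
    using s0 s1 assms by (simp add: le_divide_eq mult_left_le)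
  also have "\<dots> = sqrt 2 * al / sqrt (1 - al^2) * 1" by simp
  also have "\<dots> \<le> sqrt 2 * al / sqrt (1 - al^2) * sqrt (c / dd)"
    using k s0 assms by (intro mult_left_mono) auto
  finally show ?thesis .
qed



theorem theorem3p1:
  fixes M :: "'s measure" and X :: "nat \<Rightarrow> 's \<Rightarrow> real^'d"
    and Sig :: "real^'d^'d" and n m :: nat and lam :: real and b :: "nat \<Rightarrow> real"
    and s0 :: 's
    and f :: "real^'d \<Rightarrow> real" and g :: "real^'d \<Rightarrow> real^'d"
    and wstar :: "real^'d" and w :: "nat \<Rightarrow> real^'d"
    and a0 a1 alpha smin smax beta :: real and Om :: "real^'d^'d"
  assumes prob: "prob_space M"
    and n_pos: "n > 0" and m_pos: "m > 0" and m_dvd: "m dvd n"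
    and lam_pos: "lam > 0"
    and indep: "prob_space.indep_vars M (\<lambda>_. borel) X {..<n}"
    and ident: "\<forall>j<n. distr M borel (X j) = distr M borel (X 0)"
    and mean0: "\<forall>j<n. integrable M (X j) \<and> integral\<^sup>L M (X j) = 0"
    and cov: "\<forall>i k. integrable M (\<lambda>s. X 0 s $ i * X 0 s $ k)
                 \<and> Sig $ i $ k = integral\<^sup>L M (\<lambda>s. X 0 s $ i * X 0 s $ k)"
    and mdl: "real m * eff_dim Sig lam < real n"
    and s0: "s0 \<in> space M"
    and f_def: "f = (\<lambda>x. (1 / (2 * real n)) * (\<Sum>j<n. (X j s0 \<bullet> x - b j)\<^sup>2) + lam / 2 * (norm x)\<^sup>2)"
    and g_grad: "\<forall>x. (f has_derivative (\<lambda>h. g x \<bullet> h)) (at x)"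
    and wstar_min: "\<forall>x. f wstar \<le> f x"
    and iter: "\<forall>t. w (Suc t) = w t - matrix_inv (Htilde n m lam (eff_dim Sig lam) (\<lambda>j. X j s0)) *v g (w t)"
    and a0_def: "a0 = spec_norm (Sig - (1 / real n) *\<^sub>R gram (\<lambda>j. X j s0) {..<n})"
    and a1_def: "a1 = spec_norm (matrix_inv (Htilde n m lam (eff_dim Sig lam) (\<lambda>j. X j s0))
                   - integral\<^sup>L M (\<lambda>s. matrix_inv (Htilde n m lam (eff_dim Sig lam) (\<lambda>j. X j s))))"
    and Om_def: "Om = integral\<^sup>L M (\<lambda>s. matrix_inv (Htilde n m lam (eff_dim Sig lam) (\<lambda>j. X j s)))
                   - matrix_inv (Sig + lam *\<^sub>R mat 1)"
    and smin_def: "smin = Min (eigenvalues Sig)"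
    and smax_def: "smax = Max (eigenvalues Sig)"
    and alpha_def: "alpha = (smax + lam + a0) * (a0 / lam\<^sup>2 + a1 + spec_norm Om)"
    and beta_def: "beta = sqrt 2 * alpha / sqrt (1 - alpha\<^sup>2)
                   * sqrt ((smax + lam + a0) / (smin + lam - a0))"
    and alpha_lt1: "alpha < 1"
    and denom_pos: "smin + lam - a0 > 0"
  shows "\<forall>t. norm (w (Suc t) - wstar) \<le> beta * norm (w t - wstar)"
proof -
  define A where "A = (\<lambda>j. X j s0)"
  define G where "G = gram A {..<n}"
  define D where "D = Sig - (1 / real n) *\<^sub>R G"
  define Hm where "Hm = (1 / real n) *\<^sub>R G + lam *\<^sub>R (mat 1 :: real^'d^'d)"
  define Sm where "Sm = Sig + lam *\<^sub>R (mat 1 :: real^'d^'d)"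
  define Q where "Q = matrix_inv (Htilde n m lam (eff_dim Sig lam) (\<lambda>j. X j s0))"
  define EQ where "EQ = integral\<^sup>L M (\<lambda>s. matrix_inv (Htilde n m lam (eff_dim Sig lam) (\<lambda>j. X j s)))"
  define g0 where "g0 = (\<lambda>x. (1 / real n) *\<^sub>R (\<Sum>j<n. (A j \<bullet> x - b j) *\<^sub>R A j) + lam *\<^sub>R x)"
  have sym: "\<forall>i k. Sig$i$k = Sig$k$i"
  proof (intro allI)
    fix i k
    show "Sig$i$k = Sig$k$i" using cov[rule_format, of i k] cov[rule_format, of k i] by (simp add: mult.commute)
  qed
  have psd: "\<And>z. 0 \<le> z \<bullet> (Sig *v z)" by (rule cov_psd[OF cov])
  obtain mu where mu: "mu \<in> eigenvalues Sig" "mu \<ge> 0" "\<And>x. norm (Sig *v x) \<le> mu * norm x"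
    using eig_max[OF sym psd] by blast
  have fin: "finite (eigenvalues Sig)" by (rule eig_finite[OF sym])
  have mu_le: "mu \<le> smax" unfolding smax_def using fin mu(1) by simp
  have smin_le: "smin \<le> mu" unfolding smin_def using fin mu(1) by simp
  have a0_nn: "0 \<le> a0" unfolding a0_def by (rule spec_norm_nonneg)
  have a1_nn: "0 \<le> a1" unfolding a1_def by (rule spec_norm_nonneg)
  have Om_nn: "0 \<le> spec_norm Om" by (rule spec_norm_nonneg)
  have Hmv: "Hm *v x = (1 / real n) *\<^sub>R (G *v x) + lam *\<^sub>R x" for x
    by (simp add: Hm_def matrix_vector_mult_add_rdistrib scaleR_matrix_vector_assoc[symmetric])
  have Smv: "Sm *v x = Sig *v x + lam *\<^sub>R x" for x
    by (simp add: Sm_def matrix_vector_mult_add_rdistrib scaleR_matrix_vector_assoc[symmetric])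
  have Hq: "lam * (norm x)^2 \<le> x \<bullet> (Hm *v x)" for x
  proof -
    have "0 \<le> x \<bullet> (G *v x)" unfolding G_def gram_quad by (simp add: sum_nonneg)
    thus ?thesis by (simp add: Hmv inner_add_right dot_square_norm)
  qed
  have Sq: "lam * (norm x)^2 \<le> x \<bullet> (Sm *v x)" for x
    using psd[of x] by (simp add: Smv inner_add_right dot_square_norm)
  have Hlb: "\<And>x. lam * norm x \<le> norm (Hm *v x)" by (rule coercive_bound[OF lam_pos Hq])
  have Slb: "\<And>x. lam * norm x \<le> norm (Sm *v x)" by (rule coercive_bound[OF lam_pos Sq])
  note Hi = inv_bound[OF lam_pos Hlb]
  note Si = inv_bound[OF lam_pos Slb]
  have DSH: "D = Sm - Hm" by (simp add: D_def Sm_def Hm_def)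
  have HSD: "Hm *v x = Sig *v x + lam *\<^sub>R x - D *v x" for x
    by (simp add: DSH Smv matrix_vector_mult_diff_rdistrib)
  have f_eq: "f = (\<lambda>x. (1 / (2 * real n)) * (\<Sum>j<n. (A j \<bullet> x - b j)\<^sup>2) + lam / 2 * (norm x)\<^sup>2)"
    by (simp add: f_def A_def)
  have fder: "(f has_derivative (\<lambda>h. g0 x \<bullet> h)) (at x)" for x
    unfolding f_eq g0_def by (rule deriv_f)
  have gg: "g x = g0 x" for x
  proof -
    have "(\<lambda>h. g x \<bullet> h) = (\<lambda>h. g0 x \<bullet> h)"
      using has_derivative_unique[OF g_grad[rule_format, of x] fder[of x]] .
    hence "g x \<bullet> (g x - g0 x) = g0 x \<bullet> (g x - g0 x)" using fun_cong[of "(\<lambda>h. g x \<bullet> h)" "(\<lambda>h. g0 x \<bullet> h)" "g x - g0 x"] by simp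
    hence "(g x - g0 x) \<bullet> (g x - g0 x) = 0" by (simp add: inner_diff_left)
    thus ?thesis by simp
  qed
  have g0w: "g0 wstar = 0"
  proof -
    have "(\<lambda>h. g0 wstar \<bullet> h) = (\<lambda>v. 0)"
      by (rule differential_zero_maxmin[of wstar UNIV f]) (use fder wstar_min in auto)
    hence "g0 wstar \<bullet> g0 wstar = 0" using fun_cong[of "(\<lambda>h. g0 wstar \<bullet> h)" "(\<lambda>v. 0)" "g0 wstar"] by simp
    thus ?thesis by simp
  qed
  have g0diff: "g0 x - g0 wstar = Hm *v (x - wstar)" for x
  proof -
    have s: "(\<Sum>j<n. (A j \<bullet> x - b j) *\<^sub>R A j) - (\<Sum>j<n. (A j \<bullet> wstar - b j) *\<^sub>R A j)
        = (\<Sum>j<n. (A j \<bullet> (x - wstar)) *\<^sub>R A j)"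
      unfolding sum_subtractf[symmetric] by (intro sum.cong refl) (simp add: inner_diff_right scaleR_diff_left)
    have "g0 x - g0 wstar = (1 / real n) *\<^sub>R ((\<Sum>j<n. (A j \<bullet> x - b j) *\<^sub>R A j) - (\<Sum>j<n. (A j \<bullet> wstar - b j) *\<^sub>R A j))
         + lam *\<^sub>R (x - wstar)"
      unfolding g0_def scaleR_diff_right by simp
    also have "\<dots> = Hm *v (x - wstar)" unfolding s Hmv G_def gram_mult ..
    finally show ?thesis .
  qed
  show ?thesis
  proof (intro allI)
    fix t
    define Dl where "Dl = w t - wstar"
    define y where "y = Hm *v Dl"
    define z where "z = matrix_inv Hm *v y"
    have zD: "z = Dl" unfolding z_def y_def by (rule Hi(2))
    have gw: "g (w t) = y" using g0diff[of "w t"] g0w by (simp add: gg y_def Dl_def)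
    have step: "w (Suc t) - wstar = Dl - Q *v y" using iter gw by (simp add: Q_def Dl_def)
    have Omy: "Om *v y = EQ *v y - matrix_inv Sm *v y"
      by (simp add: Om_def EQ_def Sm_def matrix_vector_mult_diff_rdistrib)
    have RDz: "matrix_inv Sm *v (D *v z) = z - matrix_inv Sm *v y"
    proof -
      have "D *v z = Sm *v z - y" using Hi(1)[of y] by (simp add: DSH matrix_vector_mult_diff_rdistrib z_def)
      thus ?thesis by (simp add: matrix_vector_right_distrib matrix_vector_mult_diff_distrib Si(2))
    qed
    have dec: "w (Suc t) - wstar = matrix_inv Sm *v (D *v z) - Om *v y - (Q - EQ) *v y"
      using step zD RDz Omy by (simp add: matrix_vector_mult_diff_rdistrib)
    have n1: "norm (matrix_inv Sm *v (D *v z)) \<le> a0 / lam^2 * norm y"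
    proof -
      have "norm (matrix_inv Sm *v (D *v z)) \<le> norm (D *v z) / lam" by (rule Si(3))
      also have "\<dots> \<le> a0 * norm z / lam"
        using spec_norm_bound[of D z] lam_pos by (simp add: a0_def D_def G_def A_def divide_right_mono)
      also have "\<dots> \<le> a0 * (norm y / lam) / lam"
        using divide_right_mono[OF mult_left_mono[OF Hi(3)[of y] a0_nn], of lam] lam_pos unfolding z_def by simp
      also have "\<dots> = a0 / lam^2 * norm y" by (simp add: power2_eq_square)
      finally show ?thesis .
    qed
    have n2: "norm (Om *v y) \<le> spec_norm Om * norm y" by (rule spec_norm_bound)
    have n3: "norm ((Q - EQ) *v y) \<le> a1 * norm y"
      using spec_norm_bound[of "Q - EQ" y] by (simp add: a1_def Q_def EQ_def)
    have nstep: "norm (w (Suc t) - wstar) \<le> (a0 / lam^2 + a1 + spec_norm Om) * norm y"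
    proof -
      have "norm (w (Suc t) - wstar) \<le> norm (matrix_inv Sm *v (D *v z)) + norm (Om *v y) + norm ((Q - EQ) *v y)"
        unfolding dec by (smt (verit) norm_triangle_ineq4)
      thus ?thesis using n1 n2 n3 by (simp add: algebra_simps)
    qed
    have ny: "norm y \<le> (smax + lam + a0) * norm Dl"
    proof -
      have "norm y \<le> norm (Sig *v Dl) + norm (lam *\<^sub>R Dl) + norm (D *v Dl)"
        unfolding y_def HSD by (smt (verit) norm_triangle_ineq4 norm_triangle_ineq)
      also have "\<dots> \<le> mu * norm Dl + lam * norm Dl + a0 * norm Dl"
        using mu(3)[of Dl] spec_norm_bound[of D Dl] lam_pos
        by (simp add: a0_def D_def G_def A_def)
      also have "\<dots> \<le> (smax + lam + a0) * norm Dl"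
        using mu_le by (simp add: algebra_simps mult_right_mono)
      finally show ?thesis .
    qed
    have eps_nn: "0 \<le> a0 / lam^2 + a1 + spec_norm Om" using a0_nn a1_nn Om_nn by simp
    have "norm (w (Suc t) - wstar) \<le> (a0 / lam^2 + a1 + spec_norm Om) * ((smax + lam + a0) * norm Dl)"
      using nstep ny eps_nn by (meson mult_left_mono order_trans)
    also have "\<dots> = alpha * norm Dl" by (simp add: alpha_def)
    also have "\<dots> \<le> beta * norm Dl"
    proof (rule mult_right_mono)
      have cpos: "0 \<le> smax + lam + a0" using mu(2) mu_le lam_pos a0_nn by simp
      have "0 \<le> alpha" unfolding alpha_def using cpos eps_nn by simp
      thus "alpha \<le> beta" unfolding beta_def
        by (rule beta_ge[OF _ alpha_lt1 denom_pos]) (use smin_le mu_le a0_nn in simp)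
    qed simp
    finally show "norm (w (Suc t) - wstar) \<le> beta * norm (w t - wstar)" by (simp add: Dl_def)
  qed
qed

end
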